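(* Let $L>0$, $g\in L^2(0,L;\mathbb{C})$, $\lambda_0=\int_0^L\overline{g(x)}dx$, $\lambda_k=\frac{2ik\pi}{L}$ for $k\in\mathbb{Z}\setminus\{0\}$, and assume $\lambda_0\ne\lambda_k$ for all $k\ne0$. Let $\tilde A^*$ be the operator on $L^2(0,L)$ with domain $D(\tilde A^* )=\{z\in H^1(0,L):z(L)=z(0)\}$, $\tilde A^*z(x)=-z'(x)+\int_0^L\overline{g(y)}z(y)dy$, and $\tilde B^*:D(\tilde A^* )\to\mathbb{C}$, $\tilde B^*z=z(L)$. Then $\ker(\lambda-\tilde A^* )\cap\ker\tilde B^*=\{0\}$ for every $\lambda\in\mathbb{C}$ if and only if $$1+\frac{1}{\lambda_k-\lambda_0}\int_0^L\overline{g(x)}e^{-\lambda_kx}dx\ne0\quad\text{for all }k\in\mathbb{Z}\setminus\{0\}.$$ *)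

theory Defs
  imports "HOL-Analysis.Analysis"
begin

definition L2 :: "real \<Rightarrow> (real \<Rightarrow> complex) \<Rightarrow> bool" where
  "L2 L f \<longleftrightarrow> set_borel_measurable lebesgue {0..L} f
     \<and> set_integrable lebesgue {0..L} (\<lambda>x. (cmod (f x))\<^sup>2)"

text \<open>w is the (weak) L^2 derivative of z on (0,L), with z its absolutely
  continuous representative: z(x) = z(0) + integral of w over [0,x].\<close>
definition has_L2_deriv :: "real \<Rightarrow> (real \<Rightarrow> complex) \<Rightarrow> (real \<Rightarrow> complex) \<Rightarrow> bool" where
  "has_L2_deriv L z w \<longleftrightarrow> L2 L w \<and>
     (\<forall>x\<in>{0..L}. z x = z 0 + (LINT t:{0..x}|lebesgue. w t))"

definition H1 :: "real \<Rightarrow> (real \<Rightarrow> complex) \<Rightarrow> bool" where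
  "H1 L z \<longleftrightarrow> L2 L z \<and> (\<exists>w. has_L2_deriv L z w)"

definition dom_Astar :: "real \<Rightarrow> (real \<Rightarrow> complex) set" where
  "dom_Astar L = {z. H1 L z \<and> z L = z 0}"

definition in_ker_Astar :: "real \<Rightarrow> (real \<Rightarrow> complex) \<Rightarrow> complex \<Rightarrow> (real \<Rightarrow> complex) \<Rightarrow> bool" where
  "in_ker_Astar L g lam z \<longleftrightarrow> z \<in> dom_Astar L \<and>
     (\<exists>w. has_L2_deriv L z w \<and>
        (AE x in lebesgue. x \<in> {0<..<L} \<longrightarrow>
           lam * z x = - w x + (LINT y:{0..L}|lebesgue. cnj (g y) * z y)))"

definition Bstar :: "real \<Rightarrow> (real \<Rightarrow> complex) \<Rightarrow> complex" where
  "Bstar L z = z L"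

definition lam0 :: "real \<Rightarrow> (real \<Rightarrow> complex) \<Rightarrow> complex" where
  "lam0 L g = (LINT x:{0..L}|lebesgue. cnj (g x))"

definition lamk :: "real \<Rightarrow> int \<Rightarrow> complex" where
  "lamk L k = 2 * \<i> * of_int k * of_real pi / of_real L"

end

theory Submission
  imports Defs
begin

lemma L2_integrable:
  assumes "L2 L g" shows "set_integrable lebesgue {0..L} g"
proof (rule set_integrable_bound[where f="\<lambda>x. 1 + (cmod (g x))\<^sup>2"])
  have "set_integrable lebesgue {0..L} (\<lambda>x. 1::real)"
    using absolutely_integrable_continuous_real[of 0 L "\<lambda>x. 1::real"] by simp
  then show "set_integrable lebesgue {0..L} (\<lambda>x. 1 + (cmod (g x))\<^sup>2)"
    using assms unfolding L2_def by (intro set_integral_add) auto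
  show "set_borel_measurable lebesgue {0..L} g" using assms L2_def by auto
  have bnd: "cmod (g x) \<le> 1 + (cmod (g x))\<^sup>2" for x
  proof (cases "cmod (g x) \<le> 1")
    case True then show ?thesis using zero_le_power2[of "cmod (g x)"] by linarith
  next
    case False then have "cmod (g x) * 1 \<le> cmod (g x) * cmod (g x)" by (intro mult_left_mono) auto
    then show ?thesis by (simp add: power2_eq_square)
  qed
  then show "AE x in lebesgue. x \<in> {0..L} \<longrightarrow> norm (g x) \<le> norm (1 + (cmod (g x))\<^sup>2)"
  proof (intro AE_I2 impI)
    fix x
    have "norm (1 + (cmod (g x))\<^sup>2) = 1 + (cmod (g x))\<^sup>2"
      unfolding real_norm_def by (rule abs_of_nonneg) simp
    then show "norm (g x) \<le> norm (1 + (cmod (g x))\<^sup>2)" using bnd[of x] by simp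
  qed
qed

lemma integrable_prod_cont:
  fixes g h :: "real \<Rightarrow> complex"
  assumes "set_integrable lebesgue {a..b} g" "continuous_on {a..b} h"
  shows "set_integrable lebesgue {a..b} (\<lambda>x. g x * h x)"
proof -
  have "(\<lambda>x. h x * g x) absolutely_integrable_on {a..b}"
  proof (rule absolutely_integrable_bounded_measurable_product[where h="(*)"])
    show "bilinear ((*) :: complex \<Rightarrow> _)" by (rule bilinear_times)
    show "h \<in> borel_measurable (lebesgue_on {a..b})"
      by (rule continuous_imp_measurable_on_sets_lebesgue[OF assms(2)]) auto
    show "{a..b} \<in> sets lebesgue" by auto
    show "bounded (h ` {a..b})"
      by (intro compact_imp_bounded compact_continuous_image assms) auto
  qed (rule assms(1))
  then show ?thesis by (simp add: mult.commute)
qed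

lemma cont_L2:
  fixes h :: "real \<Rightarrow> complex"
  assumes "continuous_on {0..L} h" shows "L2 L h"
proof -
  have "set_integrable lebesgue {0..L} h"
    using absolutely_integrable_continuous_real[OF assms] .
  then have m: "set_borel_measurable lebesgue {0..L} h"
    unfolding set_borel_measurable_def set_integrable_def
    by (rule borel_measurable_integrable)
  have "continuous_on {0..L} (\<lambda>x. (cmod (h x))\<^sup>2)"
    by (intro continuous_intros assms)
  then have "set_integrable lebesgue {0..L} (\<lambda>x. (cmod (h x))\<^sup>2)"
    by (rule absolutely_integrable_continuous_real)
  with m show ?thesis unfolding L2_def by (intro conjI)
qed

lemma set_integrable_cnj:
  fixes g :: "real \<Rightarrow> complex"
  assumes "set_integrable lebesgue A g" shows "set_integrable lebesgue A (\<lambda>x. cnj (g x))"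
  using assms complex_integrable_cnj[of lebesgue "\<lambda>x. indicator A x *\<^sub>R g x"]
  by (simp add: set_integrable_def)

lemma cont_nonzero_not_AE:
  fixes z :: "real \<Rightarrow> complex"
  assumes "continuous_on UNIV z" "0 < t" "t < L" "z t \<noteq> 0"
  shows "\<not> (AE x in lebesgue. x \<in> {0..L} \<longrightarrow> z x = 0)"
proof
  assume "AE x in lebesgue. x \<in> {0..L} \<longrightarrow> z x = 0"
  then obtain N where N1: "{x \<in> space lebesgue. \<not>(x \<in> {0..L} \<longrightarrow> z x = 0)} \<subseteq> N"
     and N2: "emeasure lebesgue N = 0" and N3: "N \<in> sets lebesgue"
    by (rule AE_E)
  have N: "{x \<in> space lebesgue. \<not>(x \<in> {0..L} \<longrightarrow> z x = 0)} \<subseteq> N" "N \<in> null_sets lebesgue"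
    using N1 N2 N3 by (auto intro: null_setsI)
  define S where "S = {0<..<L} \<inter> z -` (-{0})"
  have "open S" unfolding S_def
    by (intro open_Int open_vimage assms) auto
  moreover have "S \<noteq> {}" using assms unfolding S_def by auto
  moreover have "negligible S"
  proof (rule negligible_subset)
    show "negligible N" using N(2) negligible_iff_null_sets by blast
    show "S \<subseteq> N" using N(1) unfolding S_def by (auto simp: subset_iff)
  qed
  ultimately show False using open_not_negligible by blast
qed

lemma exp_vd:
  fixes a :: complex
  shows "((\<lambda>x::real. exp (a * of_real x)) has_vector_derivative (a * exp (a * of_real x))) (at x within S)"
proof -
  have "((\<lambda>w. exp (a * w)) has_field_derivative exp (a * of_real x) * a) (at (of_real x))"
    by (auto intro!: derivative_eq_intros)
  from has_vector_derivative_real_field[OF this] show ?thesis by (simp add: mult.commute)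
qed

lemma kernel_zero:
  fixes L :: real and g z :: "real \<Rightarrow> complex"
  assumes Lpos: "L > 0" and gL2: "L2 L g"
    and neq: "\<forall>k::int. k \<noteq> 0 \<longrightarrow> lam0 L g \<noteq> lamk L k"
    and P: "\<forall>k::int. k \<noteq> 0 \<longrightarrow>
            1 + (1 / (lamk L k - lam0 L g)) *
                (LINT x:{0..L}|lebesgue. cnj (g x) * exp (- (lamk L k * of_real x))) \<noteq> 0"
    and ker: "in_ker_Astar L g lam z" and B: "Bstar L z = 0"
  shows "\<forall>x\<in>{0..L}. z x = 0"
proof -
  define c where "c = (LINT y:{0..L}|lebesgue. cnj (g y) * z y)"
  from ker obtain w where w: "has_L2_deriv L z w"
    and ae: "AE x in lebesgue. x \<in> {0<..<L} \<longrightarrow> lam * z x = - w x + c"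
    unfolding in_ker_Astar_def c_def by blast
  have "z L = z 0" using ker unfolding in_ker_Astar_def dom_Astar_def by simp
  with B have z0: "z 0 = 0" "z L = 0" by (auto simp: Bstar_def)
  have wint: "set_integrable lebesgue {0..L} w"
    using w L2_integrable unfolding has_L2_deriv_def by blast
  have zint: "z x = integral {0..x} w" if "x \<in> {0..L}" for x
  proof -
    have "set_integrable lebesgue {0..x} w"
      by (rule set_integrable_subset[OF wint]) (use that in auto)
    then have "(LINT t:{0..x}|lebesgue. w t) = integral {0..x} w"
      by (rule set_lebesgue_integral_eq_integral(2))
    with w that z0 show ?thesis unfolding has_L2_deriv_def by auto
  qed
  have wHK: "w integrable_on {0..L}"
    using set_lebesgue_integral_eq_integral(1)[OF wint] .
  have zc: "continuous_on {0..L} z"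
    by (rule continuous_on_eq[OF indefinite_integral_continuous_1[OF wHK]]) (use zint in auto)
  from ae obtain N where N1: "{x \<in> space lebesgue. \<not>(x \<in> {0<..<L} \<longrightarrow> lam * z x = - w x + c)} \<subseteq> N"
     and N2: "emeasure lebesgue N = 0" and N3: "N \<in> sets lebesgue"
    by (rule AE_E)
  have negN0: "negligible N" using null_setsI[OF N2 N3] negligible_iff_null_sets by blast
  have negN: "negligible (N \<union> {0, L})" using negligible_Un[OF negN0 negligible_finite[of "{0,L}"]] by simp
  define F where "F t = c - lam * z t" for t
  have zF: "z x = integral {0..x} F" if "x \<in> {0..L}" for x
  proof -
    have "integral {0..x} w = integral {0..x} F"
    proof (rule integral_spike[OF negN])
      fix t assume t: "t \<in> {0..x} - (N \<union> {0, L})"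
      then have "t \<in> {0<..<L}" using that by auto
      moreover have "t \<notin> N" using t by auto
      ultimately have "lam * z t = - w t + c" using N1 by (auto simp: subset_iff)
      then show "F t = w t" unfolding F_def by (simp add: algebra_simps)
    qed
    with zint[OF that] show ?thesis by simp
  qed
  show ?thesis
  proof (cases "lam = 0")
    case True
    have zx: "z x = of_real x * c" if "x \<in> {0..L}" for x
      using zF[OF that] that unfolding F_def True by (simp add: scaleR_conv_of_real)
    have "of_real L * c = 0" using zx[of L] z0 Lpos by simp
    then have "c = 0" using Lpos by simp
    then show ?thesis using zx by simp
  next
    case lamnz: False
    have Fc: "continuous_on {0..L} F" unfolding F_def by (intro continuous_intros zc)
    have zd: "(z has_vector_derivative F x) (at x within {0..L})" if "x \<in> {0..L}" for x
      by (rule has_vector_derivative_transform[OF that zF integral_has_vector_derivative[OF Fc that]])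
    define E where "E x = exp (lam * of_real x)" for x :: real
    define K where "K x = E x * z x - (c / lam) * E x" for x
    have Kd: "(K has_vector_derivative 0) (at x within {0..L})" if "x \<in> {0..L}" for x
    proof -
      have ed: "(E has_vector_derivative lam * E x) (at x within {0..L})"
        unfolding E_def by (rule exp_vd)
      have "(K has_vector_derivative (E x * F x + lam * E x * z x - (c / lam) * (lam * E x))) (at x within {0..L})"
        unfolding K_def
        by (intro has_vector_derivative_diff has_vector_derivative_mult ed zd that has_vector_derivative_mult_right)
      moreover have "E x * F x + lam * E x * z x - (c / lam) * (lam * E x) = 0"
        unfolding F_def using lamnz by (simp add: field_simps)
      ultimately show ?thesis by simp
    qed
    obtain C where C: "\<And>x. x \<in> {0..L} \<Longrightarrow> K x = C"
      using has_vector_derivative_zero_constant[of "{0..L}" K] Kd by (metis convex_real_interval(5))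
    have K0: "K 0 = - (c / lam)" unfolding K_def E_def using z0 by simp
    have zform: "z x = c / lam * (1 - exp (- (lam * of_real x)))" if "x \<in> {0..L}" for x
    proof -
      have "K x = K 0" using C that Lpos by auto
      then have "K x = - (c / lam)" using K0 by simp
      then have "E x * z x - c / lam * E x = - (c / lam)" unfolding K_def .
      then have eq: "E x * z x = c / lam * E x - c / lam" by (simp add: algebra_simps)
      have Enz: "E x \<noteq> 0" by (simp add: E_def)
      have "z x = (E x * z x) / E x" using Enz by simp
      also have "\<dots> = (c / lam * E x - c / lam) / E x" using eq by simp
      also have "\<dots> = c / lam * (1 - inverse (E x))" using Enz lamnz by (simp add: field_simps)
      also have "inverse (E x) = exp (- (lam * of_real x))" by (simp add: E_def exp_minus)
      finally show ?thesis .
    qed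
    show ?thesis
    proof (cases "c = 0")
      case True then show ?thesis using zform by simp
    next
      case cnz: False
      have "c / lam * (1 - exp (- (lam * of_real L))) = 0" using zform[of L] z0 Lpos by simp
      then have "exp (- (lam * of_real L)) = 1" using cnz lamnz by simp
      then obtain n :: int where re: "Re (- (lam * of_real L)) = 0" and im: "Im (- (lam * of_real L)) = of_int (2 * n) * pi"
        unfolding exp_eq_1 by blast
      define k where "k = - n"
      have lamk: "lam = lamk L k"
      proof (rule complex_eqI)
        show "Re lam = Re (lamk L k)" using re Lpos by (simp add: lamk_def)
        show "Im lam = Im (lamk L k)" using im Lpos by (simp add: lamk_def k_def field_simps)
      qed
      have knz: "k \<noteq> 0" using lamk lamnz by (auto simp: lamk_def)
      have gi: "set_integrable lebesgue {0..L} (\<lambda>x. cnj (g x))"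
        by (rule set_integrable_cnj[OF L2_integrable[OF gL2]])
      have gei: "set_integrable lebesgue {0..L} (\<lambda>x. cnj (g x) * exp (- (lam * of_real x)))"
        by (rule integrable_prod_cont[OF gi]) (intro continuous_intros)
      define G where "G = (LINT x:{0..L}|lebesgue. cnj (g x) * exp (- (lamk L k * of_real x)))"
      have "c = (LINT y:{0..L}|lebesgue. cnj (g y) * z y)" by (simp add: c_def)
      also have "\<dots> = (LINT y:{0..L}|lebesgue. c / lam * (cnj (g y) - cnj (g y) * exp (- (lam * of_real y))))"
        by (rule set_lebesgue_integral_cong) (auto simp: zform algebra_simps)
      also have "\<dots> = c / lam * (lam0 L g - G)"
        unfolding G_def lam0_def lamk[symmetric]
        by (simp add: set_integral_diff(2)[OF gi gei])
      finally have "c = c / lam * (lam0 L g - G)" .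
      then have "c * lam = c * (lam0 L g - G)" using lamnz by (simp add: field_simps)
      then have "lam = lam0 L g - G" using cnz by simp
      then have e1: "lamk L k - lam0 L g = - G" using lamk by simp
      have "lamk L k - lam0 L g \<noteq> 0" using neq knz by auto
      then have Gnz: "G \<noteq> 0" using e1 by simp
      have "1 + (1 / (lamk L k - lam0 L g)) * G = 0" unfolding e1 using Gnz by simp
      with P knz show ?thesis unfolding G_def by blast
    qed
  qed
qed

lemma kernel_nonzero:
  fixes L :: real and g :: "real \<Rightarrow> complex" and k :: int
  assumes Lpos: "L > 0" and gL2: "L2 L g"
    and neq: "\<forall>k::int. k \<noteq> 0 \<longrightarrow> lam0 L g \<noteq> lamk L k"
    and knz: "k \<noteq> 0"
    and Q: "1 + (1 / (lamk L k - lam0 L g)) *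
                (LINT x:{0..L}|lebesgue. cnj (g x) * exp (- (lamk L k * of_real x))) = 0"
  shows "\<exists>lam z. in_ker_Astar L g lam z \<and> Bstar L z = 0 \<and> \<not> (AE x in lebesgue. x \<in> {0..L} \<longrightarrow> z x = 0)"
proof -
  define lk where "lk = lamk L k"
  define G where "G = (LINT x:{0..L}|lebesgue. cnj (g x) * exp (- (lk * of_real x)))"
  define z where "z x = 1 - exp (- (lk * of_real x))" for x :: real
  define w where "w x = lk * exp (- (lk * of_real x))" for x :: real
  have zc: "continuous_on UNIV z" unfolding z_def by (intro continuous_intros)
  have wc: "continuous_on S w" for S unfolding w_def by (intro continuous_intros)
  have zd: "(z has_vector_derivative w x) (at x within S)" for x S
  proof -
    have "((\<lambda>x. exp ((-lk) * of_real x)) has_vector_derivative (-lk) * exp ((-lk) * of_real x)) (at x within S)"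
      by (rule exp_vd)
    then have "((\<lambda>x. 1 - exp ((-lk) * of_real x)) has_vector_derivative 0 - (-lk) * exp ((-lk) * of_real x)) (at x within S)"
      by (intro has_vector_derivative_diff has_vector_derivative_const)
    then show ?thesis unfolding z_def w_def by simp
  qed
  have Lk: "lk * of_real L = 2 * \<i> * of_int k * of_real pi"
    using Lpos unfolding lk_def lamk_def by (simp add: field_simps)
  have expL: "exp (- (lk * of_real L)) = 1"
    unfolding Lk exp_eq_1 by (auto intro!: exI[of _ "-k"])
  have z0: "z 0 = 0" and zL: "z L = 0" unfolding z_def using expL by auto
  have wL2: "L2 L w" by (rule cont_L2[OF wc])
  have zL2: "L2 L z" by (rule cont_L2[OF continuous_on_subset[OF zc]]) auto
  have zrep: "z x = z 0 + (LINT t:{0..x}|lebesgue. w t)" if "x \<in> {0..L}" for x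
  proof -
    have "set_integrable lebesgue {0..x} w" by (rule absolutely_integrable_continuous_real[OF wc])
    then have "(LINT t:{0..x}|lebesgue. w t) = integral {0..x} w"
      by (rule set_lebesgue_integral_eq_integral(2))
    also have "\<dots> = z x - z 0"
      by (rule integral_unique, rule fundamental_theorem_of_calculus) (use that zd in auto)
    finally show ?thesis by simp
  qed
  have hd: "has_L2_deriv L z w" unfolding has_L2_deriv_def using wL2 zrep by blast
  have gi: "set_integrable lebesgue {0..L} (\<lambda>x. cnj (g x))"
    by (rule set_integrable_cnj[OF L2_integrable[OF gL2]])
  have gei: "set_integrable lebesgue {0..L} (\<lambda>x. cnj (g x) * exp (- (lk * of_real x)))"
    by (rule integrable_prod_cont[OF gi]) (intro continuous_intros)
  have cval: "(LINT y:{0..L}|lebesgue. cnj (g y) * z y) = lam0 L g - G"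
  proof -
    have "(LINT y:{0..L}|lebesgue. cnj (g y) * z y)
        = (LINT y:{0..L}|lebesgue. cnj (g y) - cnj (g y) * exp (- (lk * of_real y)))"
      by (rule set_lebesgue_integral_cong) (auto simp: z_def algebra_simps)
    also have "\<dots> = lam0 L g - G"
      unfolding G_def lam0_def by (rule set_integral_diff(2)[OF gi gei])
    finally show ?thesis .
  qed
  have dnz: "lk - lam0 L g \<noteq> 0" using neq knz unfolding lk_def by auto
  have "lk - lam0 L g + G = 0"
  proof -
    have "(lk - lam0 L g) * (1 + (1 / (lk - lam0 L g)) * G) = 0"
      using Q unfolding lk_def G_def by simp
    moreover have "(lk - lam0 L g) * (1 + (1 / (lk - lam0 L g)) * G) = lk - lam0 L g + G"
      using dnz by (simp add: field_simps)
    ultimately show ?thesis by metis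
  qed
  then have clk: "lam0 L g - G = lk" by (simp add: algebra_simps)
  have ker: "in_ker_Astar L g lk z"
    unfolding in_ker_Astar_def dom_Astar_def H1_def
  proof (intro conjI exI CollectI)
    show "L2 L z" by fact
    show "has_L2_deriv L z w" by fact
    show "has_L2_deriv L z w" by fact
    show "z L = z 0" using z0 zL by simp
    show "AE x in lebesgue. x \<in> {0<..<L} \<longrightarrow> lk * z x = - w x + (LINT y:{0..L}|lebesgue. cnj (g y) * z y)"
      unfolding cval clk by (intro AE_I2) (simp add: z_def w_def algebra_simps)
  qed
  have B: "Bstar L z = 0" using zL by (simp add: Bstar_def)
  define t where "t = L / (2 * real_of_int \<bar>k\<bar>)"
  have kge: "real_of_int \<bar>k\<bar> \<ge> 1" using knz by linarith
  have t0: "0 < t" unfolding t_def using Lpos knz by auto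
  have tL: "t < L" unfolding t_def using Lpos kge by (simp add: divide_less_eq)
  have zt: "z t \<noteq> 0"
  proof (cases "k > 0")
    case True
    have "lk * of_real t = \<i> * of_real pi"
      unfolding lk_def lamk_def t_def using True Lpos by (simp add: field_simps)
    then have "z t = 1 - exp (- (\<i> * of_real pi))" unfolding z_def by simp
    also have "exp (- (\<i> * of_real pi)) = -1" by (simp add: exp_minus)
    finally show ?thesis by simp
  next
    case False
    then have kneg: "k < 0" using knz by simp
    have "lk * of_real t = - (\<i> * of_real pi)"
      unfolding lk_def lamk_def t_def using kneg Lpos by (simp add: field_simps)
    then have "z t = 1 - exp (\<i> * of_real pi)" unfolding z_def by simp
    then show ?thesis by simp
  qed
  have "\<not> (AE x in lebesgue. x \<in> {0..L} \<longrightarrow> z x = 0)"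
    by (rule cont_nonzero_not_AE[OF zc t0 tL zt])
  with ker B show ?thesis by blast
qed

theorem proposition9:
  fixes L :: real and g :: "real \<Rightarrow> complex"
  assumes "L > 0"
    and "L2 L g"
    and "\<forall>k::int. k \<noteq> 0 \<longrightarrow> lam0 L g \<noteq> lamk L k"
  shows "(\<forall>lam::complex. \<forall>z. in_ker_Astar L g lam z \<and> Bstar L z = 0
            \<longrightarrow> (AE x in lebesgue. x \<in> {0..L} \<longrightarrow> z x = 0))
     \<longleftrightarrow> (\<forall>k::int. k \<noteq> 0 \<longrightarrow>
            1 + (1 / (lamk L k - lam0 L g)) *
                (LINT x:{0..L}|lebesgue. cnj (g x) * exp (- (lamk L k * of_real x))) \<noteq> 0)"
proof (rule iffI)
  assume H: "\<forall>lam::complex. \<forall>z. in_ker_Astar L g lam z \<and> Bstar L z = 0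
            \<longrightarrow> (AE x in lebesgue. x \<in> {0..L} \<longrightarrow> z x = 0)"
  show "\<forall>k::int. k \<noteq> 0 \<longrightarrow>
            1 + (1 / (lamk L k - lam0 L g)) *
                (LINT x:{0..L}|lebesgue. cnj (g x) * exp (- (lamk L k * of_real x))) \<noteq> 0"
  proof (intro allI impI notI)
    fix k :: int
    assume "k \<noteq> 0" and "1 + (1 / (lamk L k - lam0 L g)) *
                (LINT x:{0..L}|lebesgue. cnj (g x) * exp (- (lamk L k * of_real x))) = 0"
    from kernel_nonzero[OF assms this] H show False by blast
  qed
next
  assume P: "\<forall>k::int. k \<noteq> 0 \<longrightarrow>
            1 + (1 / (lamk L k - lam0 L g)) *
                (LINT x:{0..L}|lebesgue. cnj (g x) * exp (- (lamk L k * of_real x))) \<noteq> 0"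
  show "\<forall>lam::complex. \<forall>z. in_ker_Astar L g lam z \<and> Bstar L z = 0
            \<longrightarrow> (AE x in lebesgue. x \<in> {0..L} \<longrightarrow> z x = 0)"
  proof (intro allI impI)
    fix lam z assume "in_ker_Astar L g lam z \<and> Bstar L z = 0"
    then have "\<forall>x\<in>{0..L}. z x = 0" using kernel_zero[OF assms P] by blast
    then show "AE x in lebesgue. x \<in> {0..L} \<longrightarrow> z x = 0" by (intro AE_I2) auto
  qed
qed

end
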